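(* Let $N\ge0$ be an integer, let $\epsilon_1,\dots,\epsilon_N$ be i.i.d. Rademacher variables, and let $E=\sum_{i=1}^N\epsilon_i$ (so $E$ has the law of $2\,\mathrm{Binom}(N,\tfrac12)-N$). Then for every $b>1$, $$\mathbb E\big[\max\{E-\tfrac1bN,0\}\big]\le\frac{1-\frac1b}{e\cdot D\big(\frac{1+1/b}{2}\,\big\|\,\frac12\big)}.$$
   Context: $D(p\|q)=p\log\frac pq+(1-p)\log\frac{1-p}{1-q}$ is the binary Kullback–Leibler divergence. *)

theory Defs
  imports "HOL-Probability.Probability"
begin

definition binKL :: "real \<Rightarrow> real \<Rightarrow> real" where
  "binKL p q = p * ln (p / q) + (1 - p) * ln ((1 - p) / (1 - q))"

definition rademacher_vec :: "nat \<Rightarrow> (nat \<Rightarrow> real) pmf" where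
  "rademacher_vec N = Pi_pmf {1..N} 0 (\<lambda>_. pmf_of_set {-1, 1})"

end

theory Submission
  imports Defs
begin

lemma ln_lt_minus_one: assumes "(x::real) > 0" "x \<noteq> 1" shows "ln x < x - 1"
proof -
  have s: "sqrt x > 0" using assms by simp
  have h1: "ln (sqrt x) \<le> sqrt x - 1" using ln_le_minus_one[OF s] .
  have h2: "ln x = 2 * ln (sqrt x)"
    using assms by (simp add: ln_sqrt)
  have "sqrt x \<noteq> 1" using assms by auto
  hence "(sqrt x - 1)^2 > 0" by simp
  hence h3: "2 * (sqrt x - 1) < x - 1" using assms by (simp add: power2_eq_square algebra_simps)
  have "ln x \<le> 2 * (sqrt x - 1)" unfolding h2 using h1 by (simp only: mult_le_cancel_left_pos)
  thus ?thesis using h3 by linarith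
qed

theorem lemma5:
  fixes N :: nat and b :: real
  assumes "b > 1"
  shows "measure_pmf.expectation (rademacher_vec N)
           (\<lambda>\<epsilon>. max ((\<Sum>i\<in>{1..N}. \<epsilon> i) - real N / b) 0)
         \<le> (1 - 1 / b) / (exp 1 * binKL ((1 + 1 / b) / 2) (1 / 2))"
proof -
  define a where "a = 1 / b"
  have a0: "a > 0" and a1: "a < 1" using assms by (auto simp: a_def)
  define p where "p = (1 + a) / 2"
  define q where "q = (1 - a) / 2"
  have p0: "p > 0" and q0: "q > 0" and pq: "p + q = 1" and qp: "q < p"
    using a0 a1 by (auto simp: p_def q_def field_simps)
  define l where "l = (ln p - ln q) / 2"
  have l0: "l \<ge> 0" using qp q0 unfolding l_def by simp
  define D where "D = binKL p (1/2)"
  have Dform: "D = p * (ln 2 + ln p) + q * (ln 2 + ln q)"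
  proof -
    have e1: "1 - p = q" using pq by simp
    have e2: "ln (p / (1/2)) = ln 2 + ln p" using p0 by (simp add: ln_mult)
    have e3: "ln (q / (1 - 1/2)) = ln 2 + ln q" using q0 by (simp add: ln_mult)
    show ?thesis unfolding D_def binKL_def e1 e2 e3 ..
  qed
  have Dpos: "D > 0"
  proof -
    have "ln (1 / (2*p)) < 1 / (2*p) - 1" using p0 qp pq by (intro ln_lt_minus_one) auto
    hence i1: "p * ln (1 / (2*p)) < p * (1 / (2*p) - 1)" using p0 by simp
    have "ln (1 / (2*q)) < 1 / (2*q) - 1" using q0 qp pq by (intro ln_lt_minus_one) auto
    hence i2: "q * ln (1 / (2*q)) < q * (1 / (2*q) - 1)" using q0 by simp
    have l1: "ln (1 / (2*p)) = - (ln 2 + ln p)" and l2: "ln (1 / (2*q)) = - (ln 2 + ln q)"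
      using p0 q0 by (simp_all add: ln_div ln_mult)
    have m1: "p * (1 / (2*p) - 1) = 1/2 - p" and m2: "q * (1 / (2*q) - 1) = 1/2 - q"
      using p0 q0 by (simp_all add: field_simps)
    have j1: "p * (ln 2 + ln p) > p - 1/2" using i1 unfolding l1 m1 by linarith
    have j2: "q * (ln 2 + ln q) > q - 1/2" using i2 unfolding l2 m2 by linarith
    show ?thesis unfolding Dform using j1 j2 pq by linarith
  qed
  have key: "exp (- l * a) * ((exp (-l) + exp l) / 2) = exp (- D)"
  proof -
    have ee: "exp l * exp l = p / q"
    proof -
      have "exp l * exp l = exp (ln p - ln q)" unfolding l_def by (simp flip: exp_add)
      also have "\<dots> = p / q" using p0 q0 by (simp add: exp_diff)
      finally show ?thesis .
    qed
    have "exp (-l) + exp l = exp (-l) * (1 + exp l * exp l)"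
      by (simp add: algebra_simps flip: exp_add)
    also have "1 + exp l * exp l = 1 / q" unfolding ee using pq q0 by (simp add: field_simps)
    hence "exp (-l) * (1 + exp l * exp l) = exp (-l) / q" by simp
    finally have s1: "exp (-l) + exp l = exp (-l) / q" .
    have "exp (- l * a) * ((exp (-l) + exp l) / 2) = exp (- l * a - l - ln 2 - ln q)"
      unfolding s1 using q0 by (simp add: exp_diff exp_add exp_minus field_simps)
    also have "- l * a - l - ln 2 - ln q = - D"
    proof -
      have "1 + a = 2 * p" unfolding p_def by simp
      have "- l * a - l = - (l * (1 + a))" by (simp add: algebra_simps)
      also have "\<dots> = - (ln p - ln q) * p" unfolding \<open>1 + a = 2 * p\<close> l_def by (simp add: field_simps)
      finally have "- l * a - l = - (ln p - ln q) * p" .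
      moreover have "(ln p - ln q) * p = p * ln p - p * ln q" by (simp add: algebra_simps)
      moreover have "p * ln q + q * ln q = ln q" "p * ln 2 + q * ln 2 = ln 2"
        using pq by (metis distrib_right mult_1)+
      moreover have "D = p * ln 2 + p * ln p + q * ln 2 + q * ln q" unfolding Dform by (simp add: algebra_simps)
      ultimately show ?thesis by linarith
    qed
    finally show ?thesis .
  qed
  define M where "M = rademacher_vec N"
  define R :: "real pmf" where "R = pmf_of_set {-1, 1}"
  have setR: "set_pmf R = {-1, 1}" unfolding R_def by simp
  have setM: "set_pmf M = PiE_dflt {1..N} 0 (\<lambda>_. {-1, 1})"
    unfolding M_def rademacher_vec_def by (simp add: set_Pi_pmf o_def)
  have finM: "finite (set_pmf M)" unfolding setM by (intro finite_PiE_dflt) auto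
  have supp: "e i \<in> {-1, 1}" if "e \<in> set_pmf M" "i \<in> {1..N}" for e i
    using that unfolding setM PiE_dflt_def by auto
  define C where "C = real N * (1 - a) * exp (- l * a * real N)"
  have pw: "max ((\<Sum>i\<in>{1..N}. e i) - real N / b) 0 \<le> C * (\<Prod>i\<in>{1..N}. exp (l * e i))"
    if e: "e \<in> set_pmf M" for e
  proof -
    define S where "S = (\<Sum>i\<in>{1..N}. e i)"
    have "S \<le> (\<Sum>i\<in>{1..N}. 1)" unfolding S_def
    proof (intro sum_mono)
      fix i assume "i \<in> {1..N}"
      from supp[OF e this] show "e i \<le> 1" by auto
    qed
    hence SN: "S \<le> real N" by simp
    have ex: "C * (\<Prod>i\<in>{1..N}. exp (l * e i)) = real N * (1 - a) * exp (l * (S - a * real N))"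
    proof -
      have "(\<Prod>i\<in>{1..N}. exp (l * e i)) = exp (l * S)"
        unfolding S_def by (simp add: exp_sum sum_distrib_left)
      thus ?thesis unfolding C_def by (simp add: algebra_simps flip: exp_add)
    qed
    have Nb: "real N / b = a * real N" unfolding a_def by simp
    show ?thesis
    proof (cases "S - a * real N \<ge> 0")
      case True
      hence "exp (l * (S - a * real N)) \<ge> 1" using l0 by simp
      moreover have "S - a * real N \<le> real N * (1 - a)" using SN by (simp add: algebra_simps)
      moreover have "real N * (1 - a) \<ge> 0" using a1 by simp
      ultimately have "S - a * real N \<le> real N * (1 - a) * exp (l * (S - a * real N))"
        by (smt (verit) mult_le_cancel_left1)
      thus ?thesis unfolding ex Nb S_def[symmetric] using True by simp
    next
      case False
      thus ?thesis unfolding ex Nb S_def[symmetric] using a1 by simp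
    qed
  qed
  have step1: "measure_pmf.expectation M (\<lambda>e. max ((\<Sum>i\<in>{1..N}. e i) - real N / b) 0)
     \<le> measure_pmf.expectation M (\<lambda>e. C * (\<Prod>i\<in>{1..N}. exp (l * e i)))"
    by (intro integral_mono_AE integrable_measure_pmf_finite finM AE_pmfI pw)
  have step2: "measure_pmf.expectation M (\<lambda>e. C * (\<Prod>i\<in>{1..N}. exp (l * e i)))
     = C * ((exp (-l) + exp l) / 2) ^ N"
  proof -
    have "measure_pmf.expectation M (\<lambda>e. (\<Prod>i\<in>{1..N}. exp (l * e i)))
       = (\<Prod>i\<in>{1..N}. measure_pmf.expectation R (\<lambda>v. exp (l * v)))"
      unfolding M_def rademacher_vec_def R_def[symmetric]
      by (intro expectation_prod_Pi_pmf integrable_measure_pmf_finite) (auto simp: setR)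
    also have "measure_pmf.expectation R (\<lambda>v. exp (l * v)) = (exp (-l) + exp l) / 2"
      unfolding R_def by (subst integral_pmf_of_set) auto
    finally show ?thesis by simp
  qed
  have step3: "C * ((exp (-l) + exp l) / 2) ^ N = (1 - a) * (real N * exp (- (real N * D)))"
  proof -
    have "exp (- l * a * real N) * ((exp (-l) + exp l) / 2) ^ N
        = (exp (- l * a) * ((exp (-l) + exp l) / 2)) ^ N"
    proof -
      have "exp (- l * a * real N) = exp (- l * a) ^ N"
        using exp_of_nat_mult[of N "- l * a"] by (simp add: mult.commute)
      thus ?thesis by (simp only: power_mult_distrib)
    qed
    also have "\<dots> = exp (- (real N * D))" unfolding key by (simp add: exp_of_nat_mult[symmetric])
    finally show ?thesis unfolding C_def by (simp add: algebra_simps)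
  qed
  have step4: "real N * exp (- (real N * D)) \<le> 1 / (exp 1 * D)"
  proof -
    define t where "t = real N * D"
    have "t \<le> exp (t - 1)" using exp_ge_add_one_self[of "t - 1"] by simp
    hence "t * exp (- t) \<le> exp (t - 1) * exp (- t)" by simp
    also have "\<dots> = exp (-1)" by (simp flip: exp_add)
    finally have "real N * D * exp (- (real N * D)) \<le> exp (-1)" unfolding t_def .
    hence "real N * exp (- (real N * D)) * D \<le> exp (-1)" by (simp add: algebra_simps)
    thus ?thesis using Dpos by (simp add: field_simps exp_minus)
  qed
  have "measure_pmf.expectation M (\<lambda>e. max ((\<Sum>i\<in>{1..N}. e i) - real N / b) 0)
     \<le> (1 - a) * (1 / (exp 1 * D))"
    using step1 step2 step3 step4 a1 by (smt (verit) mult_left_mono)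
  thus ?thesis unfolding M_def D_def p_def a_def by simp
qed

end
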